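(* Assume $\operatorname{tr}(C)>0$ and $\theta_0\neq\theta_*$. Let $N\ge1$, $\alpha=\min\Big\{\frac{\|\theta_0-\theta_*\|}{2\sqrt{\operatorname{tr}(C)}\,N^{3/2}},\frac1L\Big\}$ and $\beta\in[0,\min\{N\alpha,1/L\}]$, and run the noisy algorithm with these parameters. Then $$\mathbb{E}f(\theta_N)-f(\theta_* )\le\frac{2L\|\theta_0-\theta_*\|^2}{N^2}+\frac{4\sqrt{\operatorname{tr}(C)}\,\|\theta_0-\theta_*\|}{\sqrt N}.$$
   Context: Let $H\in\mathbb{R}^{d\times d}$ be symmetric positive definite with largest eigenvalue $L$, $q\in\mathbb{R}^d$, $f(\theta)=\frac12\langle\theta,H\theta\rangle-\langle q,\theta\rangle$, $\theta_*=H^{-1}q$. Let $(\varepsilon_n)_{n\ge2}$ be random vectors in $\mathbb{R}^d$ with $\mathbb{E}\varepsilon_n=0$, $\mathbb{E}[\varepsilon_n\varepsilon_m^\top]=0$ for $n\neq m$, and $\mathbb{E}[\varepsilon_n\varepsilon_n^\top]=C$ for all $n$. The noisy algorithm with parameters $\alpha,\beta$: given deterministic $\theta_0$, set $\theta_1=\theta_0$ and for $n\ge1$ $$\theta_{n+1}=\frac{2n}{n+1}\theta_n-\frac{n-1}{n+1}\theta_{n-1}-\frac{1}{n+1}\Big(n(\alpha+\beta)H(\theta_n-\theta_* )-(n-1)\beta H(\theta_{n-1}-\theta_* )-(n\alpha+\beta)\varepsilon_{n+1}\Big).$$ *)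

theory Defs
  imports "HOL-Analysis.Analysis" "HOL-Probability.Probability"
begin

definition quad_obj :: "real^'d^'d \<Rightarrow> real^'d \<Rightarrow> real^'d \<Rightarrow> real" where
  "quad_obj H q \<theta> = (1/2) * (\<theta> \<bullet> (H *v \<theta>)) - q \<bullet> \<theta>"

text \<open>The noisy algorithm, for a fixed realization e of the noise (e n = epsilon_n). Index k = Suc n >= 1 gives
  theta_(k+1) from theta_k, theta_(k-1), epsilon_(k+1).\<close>
fun noisy_alg :: "real^'d^'d \<Rightarrow> real^'d \<Rightarrow> real \<Rightarrow> real \<Rightarrow> real^'d \<Rightarrow> (nat \<Rightarrow> real^'d) \<Rightarrow> nat \<Rightarrow> real^'d" where
  "noisy_alg H ts a b t0 e 0 = t0"
| "noisy_alg H ts a b t0 e (Suc 0) = t0"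
| "noisy_alg H ts a b t0 e (Suc (Suc n)) =
     (let k = real (Suc n); x = noisy_alg H ts a b t0 e (Suc n); y = noisy_alg H ts a b t0 e n in
      (2 * k / (k + 1)) *\<^sub>R x - ((k - 1) / (k + 1)) *\<^sub>R y
      - (1 / (k + 1)) *\<^sub>R ((k * (a + b)) *\<^sub>R (H *v (x - ts))
                           - ((k - 1) * b) *\<^sub>R (H *v (y - ts))
                           - (k * a + b) *\<^sub>R e (Suc (Suc n))))"

end

theory Submission
  imports Defs
begin

fun Qs :: "real \<Rightarrow> real \<Rightarrow> nat \<Rightarrow> real" where
  "Qs a b 0 = 0"
| "Qs a b (Suc 0) = 1"
| "Qs a b (Suc (Suc m)) = a * Qs a b (Suc m) - b * Qs a b m"

lemma Qs_inv: "(Qs a b (Suc m))\<^sup>2 - a * Qs a b (Suc m) * Qs a b m + b * (Qs a b m)\<^sup>2 = b ^ m"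
proof (induction m)
  case 0 then show ?case by simp
next
  case (Suc m)
  have "(Qs a b (Suc (Suc m)))\<^sup>2 - a * Qs a b (Suc (Suc m)) * Qs a b (Suc m) + b * (Qs a b (Suc m))\<^sup>2
     = b * ((Qs a b (Suc m))\<^sup>2 - a * Qs a b (Suc m) * Qs a b m + b * (Qs a b m)\<^sup>2)"
    by (simp add: power2_eq_square algebra_simps)
  then show ?case using Suc by simp
qed

lemma geo_aux: fixes r :: real assumes "0 \<le> r" "r \<le> 1" shows "(1 - r) * (real m + 1) * r ^ m \<le> 1"
proof -
  have "(\<Sum>i<Suc m. r ^ m) \<le> (\<Sum>i<Suc m. r ^ i)"
    by (intro sum_mono power_decreasing) (use assms in auto)
  hence "(real m + 1) * r ^ m \<le> (\<Sum>i<Suc m. r ^ i)" by (simp add: algebra_simps)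
  hence "(1 - r) * ((real m + 1) * r ^ m) \<le> (1 - r) * (\<Sum>i<Suc m. r ^ i)"
    using assms by (intro mult_left_mono) auto
  also have "\<dots> = 1 - r ^ Suc m" using power_diff_1_eq[of r "Suc m"] by (simp only: left_diff_distrib')
  also have "\<dots> \<le> 1" using assms by simp
  finally show ?thesis by (simp add: mult.assoc)
qed

lemma Qs_first: assumes "r1 + r2 = a" "r1 * r2 = b"
  shows "Qs a b (Suc m) = r1 * Qs a b m + r2 ^ m"
proof (induction m rule: nat_less_induct)
  case (1 m)
  show ?case
  proof (cases m)
    case 0 then show ?thesis by simp
  next
    case (Suc k)
    have "Qs a b (Suc k) = r1 * Qs a b k + r2 ^ k" using 1 Suc by blast
    then show ?thesis using Suc by (simp add: assms[symmetric] algebra_simps)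
  qed
qed

lemma Qs_real_case:
  fixes x y :: real
  assumes x: "0 < x" "x \<le> 1" and y: "0 \<le> y" "y \<le> 1"
    and disc: "4 * (1 - y) \<le> (2 - x - y)\<^sup>2"
  shows "x * (Qs (2 - x - y) (1 - y) m)\<^sup>2 \<le> 1"
proof -
  define a where "a = 2 - x - y"
  define b where "b = 1 - y"
  define s where "s = sqrt (a\<^sup>2 - 4 * b)"
  define r1 where "r1 = (a + s) / 2"
  define r2 where "r2 = (a - s) / 2"
  have a0: "0 \<le> a" "a < 2" using x y by (auto simp: a_def)
  have b0: "0 \<le> b" "b \<le> 1" using y by (auto simp: b_def)
  have s0: "0 \<le> s" using disc by (simp add: s_def a_def b_def)
  have ss: "s\<^sup>2 = a\<^sup>2 - 4 * b" using disc by (simp add: s_def a_def b_def)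
  have sa: "s \<le> a"
  proof -
    have "s\<^sup>2 \<le> a\<^sup>2" using ss b0 by simp
    thus ?thesis using a0 s0 by (meson power2_le_imp_le)
  qed
  have sum12: "r1 + r2 = a" by (simp add: r1_def r2_def field_simps)
  have prod12: "r1 * r2 = b"
  proof -
    have "r1 * r2 = (a\<^sup>2 - s\<^sup>2) / 4" by (simp add: r1_def r2_def power2_eq_square algebra_simps)
    thus ?thesis using ss by simp
  qed
  have r2pos: "0 \<le> r2" using sa by (simp add: r2_def)
  have r21: "r2 \<le> r1" using s0 by (simp add: r1_def r2_def)
  have xr: "(1 - r1) * (1 - r2) = x"
  proof -
    have "(1 - r1) * (1 - r2) = 1 - (r1 + r2) + r1 * r2" by (simp add: algebra_simps)
    thus ?thesis using sum12 prod12 by (simp add: a_def b_def)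
  qed
  have r1lt: "r1 < 1"
  proof (rule ccontr)
    assume "\<not> r1 < 1"
    hence "1 - r1 \<le> 0" by simp
    with xr x have "1 - r2 < 0"
      by (metis mult_nonpos_nonneg not_le order_less_le_trans) 
    with \<open>\<not> r1 < 1\<close> sum12 a0 show False by linarith
  qed
  have r2lt: "r2 < 1" using r21 r1lt by simp
  have r1pos: "0 \<le> r1" using r21 r2pos by simp
  have f1: "\<And>m. Qs a b (Suc m) = r1 * Qs a b m + r2 ^ m" by (rule Qs_first[OF sum12 prod12])
  have f2: "\<And>m. Qs a b (Suc m) = r2 * Qs a b m + r1 ^ m"
    by (rule Qs_first) (use sum12 prod12 in \<open>simp_all add: algebra_simps\<close>)
  have nn: "0 \<le> Qs a b m" for m
  proof (induction m)
    case 0 then show ?case by simp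
  next
    case (Suc m) then show ?case using f1[of m] r1pos r2pos by simp
  qed
  have bd1: "Qs a b m \<le> 1 / (1 - r1)" for m
  proof (induction m)
    case 0 then show ?case using r1lt by simp
  next
    case (Suc m)
    have "r2 ^ m \<le> 1" using r2pos r2lt by (simp add: power_le_one)
    hence "Qs a b (Suc m) \<le> r1 * (1 / (1 - r1)) + 1"
      using f1[of m] Suc r1pos by (smt (verit) mult_left_mono)
    also have "\<dots> = 1 / (1 - r1)" using r1lt by (simp add: field_simps)
    finally show ?case .
  qed
  have bd2: "Qs a b m \<le> 1 / (1 - r2)" for m
  proof (induction m)
    case 0 then show ?case using r2lt by simp
  next
    case (Suc m)
    have "r1 ^ m \<le> 1" using r1pos r1lt by (simp add: power_le_one)
    hence "Qs a b (Suc m) \<le> r2 * (1 / (1 - r2)) + 1"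
      using f2[of m] Suc r2pos by (smt (verit) mult_left_mono)
    also have "\<dots> = 1 / (1 - r2)" using r2lt by (simp add: field_simps)
    finally show ?case .
  qed
  have c1: "(1 - r1) * Qs a b m \<le> 1" using bd1[of m] r1lt by (simp add: field_simps)
  have c2: "(1 - r2) * Qs a b m \<le> 1" using bd2[of m] r2lt by (simp add: field_simps)
  have "x * (Qs a b m)\<^sup>2 = ((1 - r1) * Qs a b m) * ((1 - r2) * Qs a b m)"
    by (simp add: xr[symmetric] power2_eq_square algebra_simps)
  also have "\<dots> \<le> 1 * 1"
    using c1 c2 nn[of m] r1lt r2lt by (intro mult_mono) auto
  finally show ?thesis by (simp add: a_def b_def)
qed

lemma Qs_cplx_case:
  fixes x y :: real
  assumes x: "0 < x" "x \<le> 1" and y: "0 \<le> y" "y \<le> 1"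
    and disc: "(2 - x - y)\<^sup>2 < 4 * (1 - y)"
  shows "x * (Qs (2 - x - y) (1 - y) m)\<^sup>2 \<le> 7/3"
proof -
  define a where "a = 2 - x - y"
  define b where "b = 1 - y"
  define \<rho> where "\<rho> = sqrt b"
  have a0: "0 \<le> a" using x y by (auto simp: a_def)
  have b0: "0 \<le> b" "b \<le> 1" using y by (auto simp: b_def)
  have ab: "b \<le> a" using x by (simp add: a_def b_def)
  have d: "a\<^sup>2 < 4 * b" using disc by (simp add: a_def b_def)
  have rb: "\<rho>\<^sup>2 = b" using b0 by (simp add: \<rho>_def)
  have r0: "0 \<le> \<rho>" "\<rho> \<le> 1" using b0 by (auto simp: \<rho>_def)
  have a2r: "a \<le> 2 * \<rho>"
  proof -
    have "a\<^sup>2 \<le> (2 * \<rho>)\<^sup>2" using d rb by (simp add: power_mult_distrib)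
    thus ?thesis using r0 by (meson power2_le_imp_le mult_nonneg_nonneg zero_le_numeral)
  qed
  have inv: "(Qs a b (Suc m) - a / 2 * Qs a b m)\<^sup>2 + (b - a\<^sup>2 / 4) * (Qs a b m)\<^sup>2 = b ^ m" for m
  proof -
    have "(Qs a b (Suc m) - a / 2 * Qs a b m)\<^sup>2 + (b - a\<^sup>2 / 4) * (Qs a b m)\<^sup>2
       = (Qs a b (Suc m))\<^sup>2 - a * Qs a b (Suc m) * Qs a b m + b * (Qs a b m)\<^sup>2"
      by (simp add: power2_eq_square algebra_simps)
    thus ?thesis using Qs_inv by simp
  qed
  have step: "\<bar>Qs a b (Suc m)\<bar> \<le> \<rho> * \<bar>Qs a b m\<bar> + \<rho> ^ m" for m
  proof -
    have h0: "0 \<le> (b - a\<^sup>2 / 4) * (Qs a b m)\<^sup>2" using d by simp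
    have h1: "(Qs a b (Suc m) - a / 2 * Qs a b m)\<^sup>2 \<le> b ^ m"
      using h0 inv[of m] by linarith
    have h2: "(\<rho>^m)\<^sup>2 = (\<rho>\<^sup>2)^m" by (metis power_mult mult.commute)
    have h3: "(Qs a b (Suc m) - a / 2 * Qs a b m)\<^sup>2 \<le> (\<rho>^m)\<^sup>2"
      using h1 h2 rb by metis
    have h4: "\<bar>Qs a b (Suc m) - a / 2 * Qs a b m\<bar> \<le> \<rho> ^ m"
      using h3 r0(1) power2_le_iff_abs_le zero_le_power by blast
    have h5: "\<bar>a / 2 * Qs a b m\<bar> = a / 2 * \<bar>Qs a b m\<bar>"
      using a0 by (simp add: abs_mult)
    have h6: "a / 2 * \<bar>Qs a b m\<bar> \<le> \<rho> * \<bar>Qs a b m\<bar>"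
      using a2r by (intro mult_right_mono) auto
    show ?thesis using h4 h5 h6 by linarith
  qed
  have lin: "\<bar>Qs a b (Suc m)\<bar> \<le> (real m + 1) * \<rho> ^ m" for m
  proof (induction m)
    case 0 then show ?case by simp
  next
    case (Suc m)
    have "\<bar>Qs a b (Suc (Suc m))\<bar> \<le> \<rho> * \<bar>Qs a b (Suc m)\<bar> + \<rho> ^ Suc m" by (rule step)
    also have "\<dots> \<le> \<rho> * ((real m + 1) * \<rho> ^ m) + \<rho> ^ Suc m"
      using Suc r0 by (intro add_right_mono mult_left_mono) auto
    also have "\<dots> = (real (Suc m) + 1) * \<rho> ^ Suc m" by (simp add: algebra_simps)
    finally show ?case .
  qed
  have quad: "(4 * b - a\<^sup>2) * (Qs a b (Suc m))\<^sup>2 \<le> 4 * b" for m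
  proof -
    have h0: "0 \<le> (Qs a b (Suc (Suc m)) - a / 2 * Qs a b (Suc m))\<^sup>2" by simp
    have h1: "(b - a\<^sup>2 / 4) * (Qs a b (Suc m))\<^sup>2 \<le> b ^ Suc m"
      using h0 inv[of "Suc m"] by linarith
    have h2: "b ^ m \<le> 1" using b0 by (intro power_le_one) auto
    have h3: "b ^ Suc m \<le> b" using mult_left_mono[OF h2 b0(1)] by simp
    have h4: "(4 * b - a\<^sup>2) * (Qs a b (Suc m))\<^sup>2 = 4 * ((b - a\<^sup>2 / 4) * (Qs a b (Suc m))\<^sup>2)"
      by (simp add: algebra_simps)
    show ?thesis using h1 h3 h4 by linarith
  qed
  define t where "t = 2 * \<rho> - a"
  have xt: "x = (1 - \<rho>)\<^sup>2 + t"
  proof -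
    have "(1 - \<rho>)\<^sup>2 = 1 - 2 * \<rho> + \<rho>\<^sup>2" by (simp add: power2_eq_square algebra_simps)
    thus ?thesis using rb unfolding t_def a_def b_def by linarith
  qed
  have main: "x * (Qs a b (Suc k))\<^sup>2 \<le> 7/3" for k
  proof (cases "t \<le> 4/3 * (1 - \<rho>)\<^sup>2")
    case True
    hence xle: "x \<le> 7/3 * (1 - \<rho>)\<^sup>2" using xt by linarith
    have g: "(1 - \<rho>) * (real k + 1) * \<rho> ^ k \<le> 1" using geo_aux r0 by blast
    have gg: "0 \<le> (1 - \<rho>) * (real k + 1) * \<rho> ^ k" using r0 by simp
    have q2: "(Qs a b (Suc k))\<^sup>2 \<le> ((real k + 1) * \<rho> ^ k)\<^sup>2"
    proof -
      have "0 \<le> (real k + 1) * \<rho> ^ k" using r0 by simp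
      thus ?thesis using lin[of k] power2_le_iff_abs_le by blast
    qed
    have "x * (Qs a b (Suc k))\<^sup>2 \<le> 7/3 * (1 - \<rho>)\<^sup>2 * ((real k + 1) * \<rho> ^ k)\<^sup>2"
      using xle x q2 by (intro mult_mono) auto
    also have "\<dots> = 7/3 * ((1 - \<rho>) * (real k + 1) * \<rho> ^ k)\<^sup>2"
      by (simp only: power_mult_distrib mult.assoc)
    also have "\<dots> \<le> 7/3 * 1"
    proof -
      have "((1 - \<rho>) * (real k + 1) * \<rho> ^ k)\<^sup>2 \<le> 1" using power_le_one[OF gg g] .
      thus ?thesis by linarith
    qed
    finally show ?thesis by linarith
  next
    case False
    have tpos: "0 < t" proof - have "0 \<le> (1 - \<rho>)\<^sup>2" by simp thus ?thesis using False by linarith qed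
    have xlt: "x \<le> 7/4 * t" using False xt by linarith
    have rpos: "0 < \<rho>" using tpos a0 unfolding t_def by linarith
    have e0: "(2 * \<rho> - a) * (2 * \<rho> + a) = 4 * \<rho>\<^sup>2 - a\<^sup>2" by (simp add: power2_eq_square algebra_simps)
    have e: "4 * b - a\<^sup>2 = t * (2 * \<rho> + a)"
      using e0 rb unfolding t_def by linarith
    have pos2: "0 < t * (2 * \<rho> + a)" using tpos rpos a0 by simp
    have qb: "(Qs a b (Suc k))\<^sup>2 \<le> 4 * b / (t * (2 * \<rho> + a))"
      using quad[of k] e pos2 by (simp add: pos_le_divide_eq mult.commute)
    have "x * (Qs a b (Suc k))\<^sup>2 \<le> 7/4 * t * (4 * b / (t * (2 * \<rho> + a)))"
      using xlt qb x by (intro mult_mono) auto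
    also have "\<dots> = 7 * b / (2 * \<rho> + a)"
    proof -
      have "7/4 * t * (4 * b / (t * (2 * \<rho> + a))) = (t * (7 * b)) / (t * (2 * \<rho> + a))" by simp
      also have "\<dots> = 7 * b / (2 * \<rho> + a)" using tpos by (simp only: mult_divide_mult_cancel_left_if) simp
      finally show ?thesis .
    qed
    also have "\<dots> \<le> 7 * b / (2 * \<rho> + b)"
      using ab rpos b0 by (intro divide_left_mono) auto
    also have "\<dots> = 7 * \<rho> / (2 + \<rho>)"
    proof -
      have bb: "b = \<rho> * \<rho>" using rb by (simp add: power2_eq_square)
      have "7 * (\<rho> * \<rho>) / (2 * \<rho> + \<rho> * \<rho>) = (\<rho> * (7 * \<rho>)) / (\<rho> * (2 + \<rho>))" by (simp add: algebra_simps)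
      also have "\<dots> = 7 * \<rho> / (2 + \<rho>)" using rpos by (simp only: mult_divide_mult_cancel_left_if) simp
      finally show ?thesis unfolding bb .
    qed
    also have "\<dots> \<le> 7/3" using r0 rpos by (simp add: divide_le_eq)
    finally show ?thesis .
  qed
  show ?thesis
  proof (cases m)
    case 0 then show ?thesis by simp
  next
    case (Suc k) then show ?thesis using main[of k] by (simp add: a_def b_def)
  qed
qed

lemma Qs_bound:
  fixes x y :: real
  assumes "0 < x" "x \<le> 1" "0 \<le> y" "y \<le> 1"
  shows "x * (Qs (2 - x - y) (1 - y) m)\<^sup>2 \<le> 7/3"
proof (cases "4 * (1 - y) \<le> (2 - x - y)\<^sup>2")
  case True
  with Qs_real_case[OF assms True, of m] show ?thesis by simp
next
  case False
  with Qs_cplx_case[OF assms, of m] show ?thesis by simp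
qed

lemma sym_dot:
  fixes H :: "real^'n^'n"
  assumes "transpose H = H"
  shows "(H *v x) \<bullet> y = x \<bullet> (H *v y)"
proof -
  have "(H *v x) \<bullet> y = (x v* transpose H) \<bullet> y" by simp
  also have "\<dots> = x \<bullet> (H *v y)" using assms by (simp add: dot_lmul_matrix)
  finally show ?thesis .
qed

lemma eig_exists:
  fixes H :: "real^'n^'n"
  assumes sym: "transpose H = H" and S: "subspace S" and ne: "S \<noteq> {0}"
    and inv: "\<And>x. x \<in> S \<Longrightarrow> H *v x \<in> S"
  shows "\<exists>v\<in>S. norm v = 1 \<and> (\<exists>\<mu>. H *v v = \<mu> *\<^sub>R v)"
proof -
  define K where "K = S \<inter> sphere 0 1"
  have cK: "compact K" unfolding K_def
    using S by (intro closed_Int_compact closed_subspace) auto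
  obtain x where x: "x \<in> S" "x \<noteq> 0" using ne S subspace_0 by blast
  have "(1 / norm x) *\<^sub>R x \<in> K" using x S by (auto simp: K_def subspace_scale)
  hence Kne: "K \<noteq> {}" by blast
  have cont: "continuous_on K (\<lambda>x. x \<bullet> (H *v x))"
    by (intro continuous_intros linear_continuous_on linear_conv_bounded_linear[THEN iffD1]) simp
  obtain v where v: "v \<in> K" and vmax: "\<And>y. y \<in> K \<Longrightarrow> y \<bullet> (H *v y) \<le> v \<bullet> (H *v v)"
    using continuous_attains_sup[OF cK Kne cont] by blast
  define \<mu> where "\<mu> = v \<bullet> (H *v v)"
  have vS: "v \<in> S" and nv: "norm v = 1" using v by (auto simp: K_def)
  have vv: "v \<bullet> v = 1" using nv by (simp add: dot_square_norm)
  have bound: "z \<bullet> (H *v z) \<le> \<mu> * (z \<bullet> z)" if "z \<in> S" for z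
  proof (cases "z = 0")
    case True then show ?thesis by simp
  next
    case False
    define c where "c = 1 / norm z"
    have cpos: "c > 0" using False by (simp add: c_def)
    have "c *\<^sub>R z \<in> K" using that S False by (auto simp: K_def c_def subspace_scale)
    hence "(c *\<^sub>R z) \<bullet> (H *v (c *\<^sub>R z)) \<le> \<mu>" using vmax \<mu>_def by blast
    hence "c\<^sup>2 * (z \<bullet> (H *v z)) \<le> \<mu>" by (simp add: matrix_vector_mult_scaleR power2_eq_square mult.assoc)
    hence "(z \<bullet> (H *v z)) \<le> \<mu> / c\<^sup>2" using cpos by (simp add: field_simps)
    also have "\<mu> / c\<^sup>2 = \<mu> * (z \<bullet> z)" using False
      by (simp add: c_def dot_square_norm power_one_over)
    finally show ?thesis .
  qed
  define w where "w = H *v v - \<mu> *\<^sub>R v"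
  have wS: "w \<in> S" using inv[OF vS] vS S by (simp add: w_def subspace_diff subspace_scale)
  have key: "w \<bullet> (H *v v) - \<mu> * (v \<bullet> w) = w \<bullet> w"
    by (simp add: w_def inner_diff_left inner_diff_right algebra_simps inner_commute)
  have hv: "(H *v w) \<bullet> v = w \<bullet> (H *v v)" using sym_dot[OF sym] by simp
  have ineq: "2 * t * (w \<bullet> w) + t\<^sup>2 * (w \<bullet> (H *v w) - \<mu> * (w \<bullet> w)) \<le> 0" for t
  proof -
    have zS: "v + t *\<^sub>R w \<in> S" using vS wS S by (simp add: subspace_add subspace_scale)
    have bnd: "(v + t *\<^sub>R w) \<bullet> (H *v (v + t *\<^sub>R w)) \<le> \<mu> * ((v + t *\<^sub>R w) \<bullet> (v + t *\<^sub>R w))"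
      by (rule bound[OF zS])
    have eq1: "(v + t *\<^sub>R w) \<bullet> (H *v (v + t *\<^sub>R w))
        = \<mu> + 2 * t * (w \<bullet> (H *v v)) + t\<^sup>2 * (w \<bullet> (H *v w))"
      using hv by (simp add: matrix_vector_right_distrib matrix_vector_mult_scaleR inner_add_left inner_add_right
          \<mu>_def power2_eq_square algebra_simps inner_commute)
    have eq2: "(v + t *\<^sub>R w) \<bullet> (v + t *\<^sub>R w) = 1 + 2 * t * (v \<bullet> w) + t\<^sup>2 * (w \<bullet> w)"
      using vv by (simp add: inner_add_left inner_add_right power2_eq_square algebra_simps inner_commute)
    have A: "\<mu> + 2 * t * (w \<bullet> (H *v v)) + t\<^sup>2 * (w \<bullet> (H *v w)) \<le> \<mu> * (1 + 2 * t * (v \<bullet> w) + t\<^sup>2 * (w \<bullet> w))"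
      using bnd unfolding eq1 eq2 .
    have key2: "w \<bullet> (H *v v) = w \<bullet> w + \<mu> * (v \<bullet> w)" using key by simp
    have "2 * t * (w \<bullet> w) + t\<^sup>2 * (w \<bullet> (H *v w) - \<mu> * (w \<bullet> w))
      = (\<mu> + 2 * t * (w \<bullet> (H *v v)) + t\<^sup>2 * (w \<bullet> (H *v w))) - \<mu> * (1 + 2 * t * (v \<bullet> w) + t\<^sup>2 * (w \<bullet> w))"
      unfolding key2 by (simp add: algebra_simps)
    with A show ?thesis by linarith
  qed
  have "w = 0"
  proof (rule ccontr)
    assume "w \<noteq> 0"
    hence wp: "w \<bullet> w > 0" by simp
    define c where "c = w \<bullet> (H *v w) - \<mu> * (w \<bullet> w)"
    define t where "t = (w \<bullet> w) / (\<bar>c\<bar> + 1)"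
    have tp: "t > 0" using wp by (simp add: t_def)
    have i1: "2 * t * (w \<bullet> w) + t\<^sup>2 * c \<le> 0" using ineq[of t] by (simp add: c_def)
    have "t * (2 * (w \<bullet> w) + t * c) = 2 * t * (w \<bullet> w) + t\<^sup>2 * c"
      by (simp add: power2_eq_square algebra_simps)
    with i1 have "t * (2 * (w \<bullet> w) + t * c) \<le> 0" by simp
    with tp have i2: "2 * (w \<bullet> w) + t * c \<le> 0" by (simp add: mult_le_0_iff)
    have "t * (\<bar>c\<bar> + 1) = w \<bullet> w" unfolding t_def by simp
    hence i3: "t * \<bar>c\<bar> < w \<bullet> w" using tp by (simp add: algebra_simps)
    have i4: "- (t * \<bar>c\<bar>) \<le> t * c" using tp by (simp add: abs_if)
    show False using i2 i3 i4 wp by linarith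
  qed
  hence "H *v v = \<mu> *\<^sub>R v" by (simp add: w_def)
  thus ?thesis using vS nv by blast
qed

lemma spectral_sub:
  fixes H :: "real^'n^'n"
  assumes sym: "transpose H = H"
  shows "subspace S \<Longrightarrow> (\<And>x. x \<in> S \<Longrightarrow> H *v x \<in> S) \<Longrightarrow>
    \<exists>B. B \<subseteq> S \<and> finite B \<and> pairwise orthogonal B \<and> (\<forall>v\<in>B. norm v = 1 \<and> (\<exists>\<mu>. H *v v = \<mu> *\<^sub>R v))
       \<and> span B = S"
proof (induction "dim S" arbitrary: S rule: less_induct)
  case less
  show ?case
  proof (cases "S = {0}")
    case True
    then show ?thesis by (intro exI[of _ "{}"]) auto
  next
    case False
    obtain v \<mu> where vS: "v \<in> S" and nv: "norm v = 1" and ev: "H *v v = \<mu> *\<^sub>R v"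
      using eig_exists[OF sym less.prems(1) False less.prems(2)] by blast
    define S' where "S' = S \<inter> {x. orthogonal v x}"
    have sub': "subspace S'" unfolding S'_def
      using less.prems(1) subspace_orthogonal_to_vector[of v] by (rule subspace_inter)
    have inv': "H *v x \<in> S'" if "x \<in> S'" for x
    proof -
      have "v \<bullet> (H *v x) = (H *v v) \<bullet> x" using sym_dot[OF sym] by simp
      also have "\<dots> = \<mu> * (v \<bullet> x)" using ev by simp
      also have "\<dots> = 0" using that by (simp add: S'_def orthogonal_def)
      finally show ?thesis using that less.prems(2) by (simp add: S'_def orthogonal_def)
    qed
    have vnot: "v \<notin> S'" using nv by (auto simp: S'_def orthogonal_def)
    have psub: "S' \<subset> S" using vS vnot by (auto simp: S'_def)
    have "dim S' < dim S"
      using psub sub' less.prems(1) by (intro dim_psubset) (metis span_eq_iff)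
    then obtain B' where B': "B' \<subseteq> S'" "finite B'" "pairwise orthogonal B'"
      "\<forall>v\<in>B'. norm v = 1 \<and> (\<exists>\<mu>. H *v v = \<mu> *\<^sub>R v)" "span B' = S'"
      using less.hyps[OF _ sub' inv'] by blast
    have vB: "v \<notin> B'" using B'(1) vnot by blast
    show ?thesis
    proof (intro exI[of _ "insert v B'"] conjI)
      show "insert v B' \<subseteq> S" using B'(1) vS by (auto simp: S'_def)
      show "finite (insert v B')" using B'(2) by simp
      show "pairwise orthogonal (insert v B')"
        using B'(3) B'(1) unfolding pairwise_insert
        by (auto simp: S'_def orthogonal_commute)
      show "\<forall>u\<in>insert v B'. norm u = 1 \<and> (\<exists>\<mu>. H *v u = \<mu> *\<^sub>R u)" using B'(4) nv ev by auto
      show "span (insert v B') = S"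
      proof
        show "span (insert v B') \<subseteq> S"
          using \<open>insert v B' \<subseteq> S\<close> less.prems(1) by (rule span_minimal)
        show "S \<subseteq> span (insert v B')"
        proof
          fix x assume xS: "x \<in> S"
          have vv: "v \<bullet> v = 1" using nv by (simp add: dot_square_norm)
          have "x - (v \<bullet> x) *\<^sub>R v \<in> S'"
            using xS vS less.prems(1) vv
            by (auto simp: S'_def orthogonal_def inner_diff_right subspace_diff subspace_scale)
          hence "x - (v \<bullet> x) *\<^sub>R v \<in> span (insert v B')"
            using B'(5) span_mono[of B' "insert v B'"] by auto
          moreover have "(v \<bullet> x) *\<^sub>R v \<in> span (insert v B')"
            by (intro span_mul span_base) simp
          ultimately have "(x - (v \<bullet> x) *\<^sub>R v) + (v \<bullet> x) *\<^sub>R v \<in> span (insert v B')"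
            by (rule span_add)
          thus "x \<in> span (insert v B')" by simp
        qed
      qed
    qed
  qed
qed

lemma onb_expand:
  fixes B :: "('a::real_inner) set"
  assumes fin: "finite B" and orth: "pairwise orthogonal B" and nrm: "\<forall>v\<in>B. norm v = 1"
    and sp: "z \<in> span B"
  shows "z = (\<Sum>v\<in>B. (v \<bullet> z) *\<^sub>R v)"
proof -
  obtain c where zc: "z = (\<Sum>v\<in>B. c v *\<^sub>R v)" using sp fin span_finite by fastforce
  have "u \<bullet> z = c u" if "u \<in> B" for u
  proof -
    have "u \<bullet> z = (\<Sum>v\<in>B. c v * (u \<bullet> v))" by (simp add: zc inner_sum_right)
    also have "\<dots> = (\<Sum>v\<in>B. if v = u then c v else 0)"
    proof (rule sum.cong)
      fix v assume "v \<in> B"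
      show "c v * (u \<bullet> v) = (if v = u then c v else 0)"
      proof (cases "v = u")
        case True
        then show ?thesis using nrm that by (simp add: dot_square_norm)
      next
        case False
        then show ?thesis using orth that \<open>v \<in> B\<close> by (simp add: pairwise_def orthogonal_def)
      qed
    qed simp
    also have "\<dots> = c u" using fin that by simp
    finally show ?thesis .
  qed
  then show ?thesis using zc by (metis (no_types, lifting) sum.cong)
qed

lemma onb_inner:
  fixes B :: "('a::real_inner) set"
  assumes fin: "finite B" and orth: "pairwise orthogonal B" and nrm: "\<forall>v\<in>B. norm v = 1"
    and sp: "z \<in> span B"
  shows "z \<bullet> w = (\<Sum>v\<in>B. (v \<bullet> z) * (v \<bullet> w))"
proof -
  have "z \<bullet> w = (\<Sum>v\<in>B. (v \<bullet> z) *\<^sub>R v) \<bullet> w" using onb_expand[OF assms] by simp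
  also have "\<dots> = (\<Sum>v\<in>B. (v \<bullet> z) * (v \<bullet> w))" by (simp add: inner_sum_left)
  finally show ?thesis .
qed

lemma spectral:
  fixes H :: "real^'n^'n"
  assumes sym: "transpose H = H"
  shows "\<exists>B. finite B \<and> pairwise orthogonal B \<and> (\<forall>v\<in>B. norm v = 1 \<and> (\<exists>\<mu>. H *v v = \<mu> *\<^sub>R v))
       \<and> span B = UNIV"
  using spectral_sub[OF sym, of UNIV] by auto

lemma aux_div: fixes k A B x y z t :: real assumes "k + 1 \<noteq> 0"
  shows "(k + 1) * (A / (k + 1) * x - B / (k + 1) * y - 1 / (k + 1) * z - t) = A * x - B * y - z - (k + 1) * t"
proof -
  have c: "(k + 1) * (c / (k + 1) * w) = c * w" for c w using assms by simp
  show ?thesis by (simp only: right_diff_distrib c)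
qed

lemma step_scalar:
  fixes H :: "real^'n^'n" and v X Y ts E :: "real^'n"
  assumes hv: "\<And>z. v \<bullet> (H *v z) = h * (v \<bullet> z)" and k: "k \<ge> 0"
  shows "(k + 1) * (v \<bullet> ((2 * k / (k + 1)) *\<^sub>R X - ((k - 1) / (k + 1)) *\<^sub>R Y
      - (1 / (k + 1)) *\<^sub>R ((k * (a + b)) *\<^sub>R (H *v (X - ts))
                           - ((k - 1) * b) *\<^sub>R (H *v (Y - ts))
                           - (k * a + b) *\<^sub>R E) - ts))
    = (2 - (a + b) * h) * (k * (v \<bullet> (X - ts))) - (1 - b * h) * ((k - 1) * (v \<bullet> (Y - ts)))
      + (k * a + b) * (v \<bullet> E)"
proof -
  have k1: "k + 1 \<noteq> 0" using k by simp
  have "v \<bullet> ((2 * k / (k + 1)) *\<^sub>R X - ((k - 1) / (k + 1)) *\<^sub>R Y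
      - (1 / (k + 1)) *\<^sub>R ((k * (a + b)) *\<^sub>R (H *v (X - ts))
                           - ((k - 1) * b) *\<^sub>R (H *v (Y - ts))
                           - (k * a + b) *\<^sub>R E) - ts)
    = (2 * k / (k + 1)) * (v \<bullet> X) - ((k - 1) / (k + 1)) * (v \<bullet> Y)
      - (1 / (k + 1)) * ((k * (a + b)) * (h * (v \<bullet> X - v \<bullet> ts)) - ((k - 1) * b) * (h * (v \<bullet> Y - v \<bullet> ts))
         - (k * a + b) * (v \<bullet> E)) - v \<bullet> ts"
    by (simp add: inner_diff_right hv)
  also have "(k + 1) * \<dots> = (2 - (a + b) * h) * (k * (v \<bullet> X - v \<bullet> ts)) - (1 - b * h) * ((k - 1) * (v \<bullet> Y - v \<bullet> ts))
      + (k * a + b) * (v \<bullet> E)"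
    unfolding aux_div[OF k1] by (simp add: algebra_simps)
  finally show ?thesis by (simp add: inner_diff_right)
qed

definition wt :: "real \<Rightarrow> real \<Rightarrow> (nat \<Rightarrow> real) \<Rightarrow> nat \<Rightarrow> real" where
  "wt a b \<eta> k = (if 2 \<le> k then ((real k - 1) * a + b) * \<eta> k else 0)"

lemma sum_rec:
  fixes w :: "nat \<Rightarrow> real"
  shows "(\<Sum>k\<le>Suc (Suc n). w k * Qs A B (Suc (Suc (Suc n)) - k))
    = A * (\<Sum>k\<le>Suc n. w k * Qs A B (Suc (Suc n) - k)) - B * (\<Sum>k\<le>n. w k * Qs A B (Suc n - k))
      + w (Suc (Suc n))"
proof -
  have "(\<Sum>k\<le>Suc n. w k * Qs A B (Suc (Suc (Suc n)) - k))
      = (\<Sum>k\<le>Suc n. A * (w k * Qs A B (Suc (Suc n) - k)) - B * (w k * Qs A B (Suc n - k)))"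
  proof (rule sum.cong)
    fix k assume "k \<in> {..Suc n}"
    hence "Suc (Suc (Suc n)) - k = Suc (Suc (Suc n - k))" and "Suc (Suc n) - k = Suc (Suc n - k)"
      by auto
    thus "w k * Qs A B (Suc (Suc (Suc n)) - k) = A * (w k * Qs A B (Suc (Suc n) - k)) - B * (w k * Qs A B (Suc n - k))"
      by (simp add: algebra_simps)
  qed simp
  also have "\<dots> = A * (\<Sum>k\<le>Suc n. w k * Qs A B (Suc (Suc n) - k)) - B * (\<Sum>k\<le>Suc n. w k * Qs A B (Suc n - k))"
    by (simp add: sum_subtractf sum_distrib_left distrib_left)
  also have "(\<Sum>k\<le>Suc n. w k * Qs A B (Suc n - k)) = (\<Sum>k\<le>n. w k * Qs A B (Suc n - k))"
    by simp
  finally show ?thesis by simp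
qed

lemma alg_rep:
  fixes H :: "real^'n^'n" and v ts t0 :: "real^'n" and e :: "nat \<Rightarrow> real^'n"
  assumes hv: "\<And>z. v \<bullet> (H *v z) = h * (v \<bullet> z)"
  shows "real n * (v \<bullet> (noisy_alg H ts a b t0 e n - ts))
    = Qs (2 - (a + b) * h) (1 - b * h) n * (v \<bullet> (t0 - ts))
      + (\<Sum>k\<le>n. wt a b (\<lambda>k. v \<bullet> e k) k * Qs (2 - (a + b) * h) (1 - b * h) (Suc n - k))"
proof -
  define A where "A = 2 - (a + b) * h"
  define B where "B = 1 - b * h"
  define w where "w = wt a b (\<lambda>k. v \<bullet> e k)"
  define d where "d = v \<bullet> (t0 - ts)"
  define P where "P n \<longleftrightarrow> real n * (v \<bullet> (noisy_alg H ts a b t0 e n - ts))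
    = Qs A B n * d + (\<Sum>k\<le>n. w k * Qs A B (Suc n - k))" for n
  have "P n \<and> P (Suc n)"
  proof (induction n)
    case 0
    show ?case by (simp add: P_def w_def wt_def d_def)
  next
    case (Suc n)
    hence IH1: "P n" and IH2: "P (Suc n)" by auto
    define k where "k = real (Suc n)"
    have k0: "k \<ge> 0" by (simp add: k_def)
    define X where "X = noisy_alg H ts a b t0 e (Suc n)"
    define Y where "Y = noisy_alg H ts a b t0 e n"
    have def_eq: "noisy_alg H ts a b t0 e (Suc (Suc n)) =
      (2 * k / (k + 1)) *\<^sub>R X - ((k - 1) / (k + 1)) *\<^sub>R Y
      - (1 / (k + 1)) *\<^sub>R ((k * (a + b)) *\<^sub>R (H *v (X - ts))
                           - ((k - 1) * b) *\<^sub>R (H *v (Y - ts))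
                           - (k * a + b) *\<^sub>R e (Suc (Suc n)))"
      by (simp only: noisy_alg.simps Let_def k_def X_def Y_def)
    have st: "(k + 1) * (v \<bullet> (noisy_alg H ts a b t0 e (Suc (Suc n)) - ts))
      = A * (k * (v \<bullet> (X - ts))) - B * ((k - 1) * (v \<bullet> (Y - ts)))
        + (k * a + b) * (v \<bullet> e (Suc (Suc n)))"
      unfolding def_eq A_def B_def by (rule step_scalar[OF hv k0])
    have kk: "k + 1 = real (Suc (Suc n))" "k - 1 = real n" "k = real (Suc n)" by (simp_all add: k_def)
    have wl: "w (Suc (Suc n)) = (k * a + b) * (v \<bullet> e (Suc (Suc n)))"
      by (simp add: w_def wt_def k_def)
    have I1: "k * (v \<bullet> (X - ts)) = Qs A B (Suc n) * d + (\<Sum>k\<le>Suc n. w k * Qs A B (Suc (Suc n) - k))"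
      using IH2 unfolding P_def X_def kk(3) .
    have I0: "(k - 1) * (v \<bullet> (Y - ts)) = Qs A B n * d + (\<Sum>k\<le>n. w k * Qs A B (Suc n - k))"
      using IH1 unfolding P_def Y_def kk(2) .
    have "real (Suc (Suc n)) * (v \<bullet> (noisy_alg H ts a b t0 e (Suc (Suc n)) - ts))
      = A * (Qs A B (Suc n) * d + (\<Sum>k\<le>Suc n. w k * Qs A B (Suc (Suc n) - k)))
        - B * (Qs A B n * d + (\<Sum>k\<le>n. w k * Qs A B (Suc n - k))) + w (Suc (Suc n))"
      using st unfolding I1 I0 wl kk(1) .
    also have "\<dots> = (A * Qs A B (Suc n) - B * Qs A B n) * d
       + (A * (\<Sum>k\<le>Suc n. w k * Qs A B (Suc (Suc n) - k)) - B * (\<Sum>k\<le>n. w k * Qs A B (Suc n - k))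
          + w (Suc (Suc n)))"
      by (simp add: algebra_simps)
    also have "\<dots> = Qs A B (Suc (Suc n)) * d + (\<Sum>k\<le>Suc (Suc n). w k * Qs A B (Suc (Suc (Suc n)) - k))"
      by (simp only: sum_rec Qs.simps)
    finally have "P (Suc (Suc n))" unfolding P_def .
    with IH2 show ?case by simp
  qed
  thus ?thesis by (simp add: P_def A_def B_def w_def d_def)
qed

context prob_space begin

lemma vn_meas:
  fixes f :: "'a \<Rightarrow> real^'n"
  assumes "f \<in> borel_measurable M"
  shows "(\<lambda>\<omega>. f \<omega> $ i) \<in> borel_measurable M"
  using borel_measurable_continuous_on[OF linear_continuous_on[OF bounded_linear_vec_nth] assms] .

lemma L2_comp_int:
  fixes f :: "'a \<Rightarrow> real^'n"
  assumes m: "f \<in> borel_measurable M" and l2: "integrable M (\<lambda>\<omega>. (norm (f \<omega>))\<^sup>2)"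
  shows "integrable M (\<lambda>\<omega>. f \<omega> $ i)"
proof (rule Bochner_Integration.integrable_bound)
  show "integrable M (\<lambda>\<omega>. 1 + (norm (f \<omega>))\<^sup>2)" using l2 by simp
  show "(\<lambda>\<omega>. f \<omega> $ i) \<in> borel_measurable M" by (rule vn_meas[OF m])
  show "AE \<omega> in M. norm (f \<omega> $ i) \<le> norm (1 + (norm (f \<omega>))\<^sup>2)"
  proof (rule AE_I2)
    fix \<omega>
    have a: "\<bar>f \<omega> $ i\<bar> \<le> norm (f \<omega>)" by (rule component_le_norm_cart)
    have b: "norm (f \<omega>) \<le> 1 + (norm (f \<omega>))\<^sup>2"
    proof -
      have "0 \<le> (norm (f \<omega>) - 1)\<^sup>2" by simp
      moreover have "(norm (f \<omega>) - 1)\<^sup>2 = (norm (f \<omega>))\<^sup>2 - 2 * norm (f \<omega>) + 1"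
        by (simp add: power2_eq_square algebra_simps)
      moreover have "0 \<le> norm (f \<omega>)" by simp
      ultimately show ?thesis by linarith
    qed
    show "norm (f \<omega> $ i) \<le> norm (1 + (norm (f \<omega>))\<^sup>2)" using a b by simp
  qed
qed

lemma L2_prod_int:
  fixes f g :: "'a \<Rightarrow> real^'n"
  assumes mf: "f \<in> borel_measurable M" and lf: "integrable M (\<lambda>\<omega>. (norm (f \<omega>))\<^sup>2)"
    and mg: "g \<in> borel_measurable M" and lg: "integrable M (\<lambda>\<omega>. (norm (g \<omega>))\<^sup>2)"
  shows "integrable M (\<lambda>\<omega>. f \<omega> $ i * g \<omega> $ j)"
proof (rule Bochner_Integration.integrable_bound)
  show "integrable M (\<lambda>\<omega>. (norm (f \<omega>))\<^sup>2 + (norm (g \<omega>))\<^sup>2)" using lf lg by simp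
  show "(\<lambda>\<omega>. f \<omega> $ i * g \<omega> $ j) \<in> borel_measurable M"
    using vn_meas[OF mf] vn_meas[OF mg] by (rule borel_measurable_times)
  show "AE \<omega> in M. norm (f \<omega> $ i * g \<omega> $ j) \<le> norm ((norm (f \<omega>))\<^sup>2 + (norm (g \<omega>))\<^sup>2)"
  proof (rule AE_I2)
    fix \<omega>
    have a: "\<bar>f \<omega> $ i\<bar> \<le> norm (f \<omega>)" by (rule component_le_norm_cart)
    have b: "\<bar>g \<omega> $ j\<bar> \<le> norm (g \<omega>)" by (rule component_le_norm_cart)
    have c: "\<bar>f \<omega> $ i * g \<omega> $ j\<bar> \<le> norm (f \<omega>) * norm (g \<omega>)"
      unfolding abs_mult using a b by (intro mult_mono) auto
    have d: "norm (f \<omega>) * norm (g \<omega>) \<le> (norm (f \<omega>))\<^sup>2 + (norm (g \<omega>))\<^sup>2"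
    proof -
      have "0 \<le> (norm (f \<omega>) - norm (g \<omega>))\<^sup>2" by simp
      moreover have "(norm (f \<omega>) - norm (g \<omega>))\<^sup>2 = (norm (f \<omega>))\<^sup>2 - 2 * (norm (f \<omega>) * norm (g \<omega>)) + (norm (g \<omega>))\<^sup>2"
        by (simp add: power2_eq_square algebra_simps)
      moreover have "0 \<le> norm (f \<omega>) * norm (g \<omega>)" by simp
      ultimately show ?thesis by linarith
    qed
    show "norm (f \<omega> $ i * g \<omega> $ j) \<le> norm ((norm (f \<omega>))\<^sup>2 + (norm (g \<omega>))\<^sup>2)"
      using c d by simp
  qed
qed

lemma E1:
  fixes f :: "'a \<Rightarrow> real^'n"
  assumes m: "f \<in> borel_measurable M" and l2: "integrable M (\<lambda>\<omega>. (norm (f \<omega>))\<^sup>2)"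
    and mean: "\<And>i. expectation (\<lambda>\<omega>. f \<omega> $ i) = 0"
  shows "integrable M (\<lambda>\<omega>. c \<bullet> f \<omega>)" "expectation (\<lambda>\<omega>. c \<bullet> f \<omega>) = 0"
proof -
  have eq: "(\<lambda>\<omega>. c \<bullet> f \<omega>) = (\<lambda>\<omega>. \<Sum>i\<in>UNIV. c $ i * f \<omega> $ i)"
    by (simp add: inner_vec_def)
  have int: "integrable M (\<lambda>\<omega>. c $ i * f \<omega> $ i)" for i
    using L2_comp_int[OF m l2] by simp
  show "integrable M (\<lambda>\<omega>. c \<bullet> f \<omega>)" unfolding eq using int by simp
  have "expectation (\<lambda>\<omega>. c \<bullet> f \<omega>) = (\<Sum>i\<in>UNIV. expectation (\<lambda>\<omega>. c $ i * f \<omega> $ i))"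
    unfolding eq using int by (simp add: integral_sum)
  also have "\<dots> = 0" using mean by simp
  finally show "expectation (\<lambda>\<omega>. c \<bullet> f \<omega>) = 0" .
qed

lemma E2:
  fixes f g :: "'a \<Rightarrow> real^'n"
  assumes mf: "f \<in> borel_measurable M" and lf: "integrable M (\<lambda>\<omega>. (norm (f \<omega>))\<^sup>2)"
    and mg: "g \<in> borel_measurable M" and lg: "integrable M (\<lambda>\<omega>. (norm (g \<omega>))\<^sup>2)"
  shows "integrable M (\<lambda>\<omega>. (c \<bullet> f \<omega>) * (c' \<bullet> g \<omega>))"
    "(\<And>i j. expectation (\<lambda>\<omega>. f \<omega> $ i * g \<omega> $ j) = 0) \<Longrightarrow> expectation (\<lambda>\<omega>. (c \<bullet> f \<omega>) * (c' \<bullet> g \<omega>)) = 0"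
proof -
  have eq: "(\<lambda>\<omega>. (c \<bullet> f \<omega>) * (c' \<bullet> g \<omega>)) = (\<lambda>\<omega>. \<Sum>i\<in>UNIV. \<Sum>j\<in>UNIV. (c $ i * c' $ j) * (f \<omega> $ i * g \<omega> $ j))"
    by (simp add: inner_vec_def sum_product algebra_simps)
  have int: "integrable M (\<lambda>\<omega>. (c $ i * c' $ j) * (f \<omega> $ i * g \<omega> $ j))" for i j
    using L2_prod_int[OF mf lf mg lg] by simp
  show "integrable M (\<lambda>\<omega>. (c \<bullet> f \<omega>) * (c' \<bullet> g \<omega>))" unfolding eq using int by simp
  assume z: "\<And>i j. expectation (\<lambda>\<omega>. f \<omega> $ i * g \<omega> $ j) = 0"
  have "expectation (\<lambda>\<omega>. (c \<bullet> f \<omega>) * (c' \<bullet> g \<omega>))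
     = (\<Sum>i\<in>UNIV. \<Sum>j\<in>UNIV. expectation (\<lambda>\<omega>. (c $ i * c' $ j) * (f \<omega> $ i * g \<omega> $ j)))"
    unfolding eq using int by (simp add: integral_sum)
  also have "\<dots> = 0" using z by simp
  finally show "expectation (\<lambda>\<omega>. (c \<bullet> f \<omega>) * (c' \<bullet> g \<omega>)) = 0" .
qed

lemma E3:
  fixes f :: "'a \<Rightarrow> real^'n"
  assumes mf: "f \<in> borel_measurable M" and lf: "integrable M (\<lambda>\<omega>. (norm (f \<omega>))\<^sup>2)"
    and cov: "\<And>i j. expectation (\<lambda>\<omega>. f \<omega> $ i * f \<omega> $ j) = C $ i $ j"
  shows "expectation (\<lambda>\<omega>. (norm (f \<omega>))\<^sup>2) = trace C"
proof -
  have eq: "(\<lambda>\<omega>. (norm (f \<omega>))\<^sup>2) = (\<lambda>\<omega>. \<Sum>i\<in>UNIV. f \<omega> $ i * f \<omega> $ i)"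
    by (simp add: power2_norm_eq_inner inner_vec_def)
  have int: "integrable M (\<lambda>\<omega>. f \<omega> $ i * f \<omega> $ i)" for i
    using L2_prod_int[OF mf lf mf lf] by simp
  have "expectation (\<lambda>\<omega>. (norm (f \<omega>))\<^sup>2) = (\<Sum>i\<in>UNIV. expectation (\<lambda>\<omega>. f \<omega> $ i * f \<omega> $ i))"
    unfolding eq using int by (simp add: integral_sum)
  also have "\<dots> = trace C" using cov by (simp add: trace_def)
  finally show ?thesis .
qed

lemma exp_sq:
  fixes \<eta> :: "nat \<Rightarrow> 'a \<Rightarrow> real"
  assumes fin: "finite K"
    and int1: "\<And>k. k \<in> K \<Longrightarrow> integrable M (\<eta> k)"
    and mean: "\<And>k. k \<in> K \<Longrightarrow> expectation (\<eta> k) = 0"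
    and int2: "\<And>k l. k \<in> K \<Longrightarrow> l \<in> K \<Longrightarrow> integrable M (\<lambda>\<omega>. \<eta> k \<omega> * \<eta> l \<omega>)"
    and unc: "\<And>k l. k \<in> K \<Longrightarrow> l \<in> K \<Longrightarrow> k \<noteq> l \<Longrightarrow> expectation (\<lambda>\<omega>. \<eta> k \<omega> * \<eta> l \<omega>) = 0"
  shows "integrable M (\<lambda>\<omega>. (d + (\<Sum>k\<in>K. g k * \<eta> k \<omega>))\<^sup>2)"
    "expectation (\<lambda>\<omega>. (d + (\<Sum>k\<in>K. g k * \<eta> k \<omega>))\<^sup>2)
      = d\<^sup>2 + (\<Sum>k\<in>K. (g k)\<^sup>2 * expectation (\<lambda>\<omega>. (\<eta> k \<omega>)\<^sup>2))"
proof -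
  have eq: "(\<lambda>\<omega>. (d + (\<Sum>k\<in>K. g k * \<eta> k \<omega>))\<^sup>2) = (\<lambda>\<omega>. d\<^sup>2 + (\<Sum>k\<in>K. (2 * d * g k) * \<eta> k \<omega>)
      + (\<Sum>k\<in>K. \<Sum>l\<in>K. (g k * g l) * (\<eta> k \<omega> * \<eta> l \<omega>)))"
    by (simp add: power2_eq_square sum_product algebra_simps sum_distrib_left)
  have iA: "integrable M (\<lambda>\<omega>. \<Sum>k\<in>K. (2 * d * g k) * \<eta> k \<omega>)" using int1 by simp
  have iB: "integrable M (\<lambda>\<omega>. \<Sum>k\<in>K. \<Sum>l\<in>K. (g k * g l) * (\<eta> k \<omega> * \<eta> l \<omega>))" using int2 by simp
  show "integrable M (\<lambda>\<omega>. (d + (\<Sum>k\<in>K. g k * \<eta> k \<omega>))\<^sup>2)" unfolding eq using iA iB by simp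
  have eA: "expectation (\<lambda>\<omega>. \<Sum>k\<in>K. (2 * d * g k) * \<eta> k \<omega>) = 0"
    using int1 mean by (simp add: integral_sum)
  have eB: "expectation (\<lambda>\<omega>. \<Sum>k\<in>K. \<Sum>l\<in>K. (g k * g l) * (\<eta> k \<omega> * \<eta> l \<omega>))
     = (\<Sum>k\<in>K. \<Sum>l\<in>K. (g k * g l) * expectation (\<lambda>\<omega>. \<eta> k \<omega> * \<eta> l \<omega>))"
    using int2 by (simp add: integral_sum)
  also have "\<dots> = (\<Sum>k\<in>K. (g k)\<^sup>2 * expectation (\<lambda>\<omega>. (\<eta> k \<omega>)\<^sup>2))"
  proof (rule sum.cong)
    fix k assume k: "k \<in> K"
    have "(\<Sum>l\<in>K. (g k * g l) * expectation (\<lambda>\<omega>. \<eta> k \<omega> * \<eta> l \<omega>))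
        = (\<Sum>l\<in>K. if l = k then (g k * g l) * expectation (\<lambda>\<omega>. \<eta> k \<omega> * \<eta> l \<omega>) else 0)"
      by (rule sum.cong) (use unc k in auto)
    also have "\<dots> = (g k)\<^sup>2 * expectation (\<lambda>\<omega>. (\<eta> k \<omega>)\<^sup>2)"
      using fin k by (simp add: power2_eq_square)
    finally show "(\<Sum>l\<in>K. (g k * g l) * expectation (\<lambda>\<omega>. \<eta> k \<omega> * \<eta> l \<omega>))
        = (g k)\<^sup>2 * expectation (\<lambda>\<omega>. (\<eta> k \<omega>)\<^sup>2)" .
  qed simp
  finally have eB': "expectation (\<lambda>\<omega>. \<Sum>k\<in>K. \<Sum>l\<in>K. (g k * g l) * (\<eta> k \<omega> * \<eta> l \<omega>))
     = (\<Sum>k\<in>K. (g k)\<^sup>2 * expectation (\<lambda>\<omega>. (\<eta> k \<omega>)\<^sup>2))" .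
  show "expectation (\<lambda>\<omega>. (d + (\<Sum>k\<in>K. g k * \<eta> k \<omega>))\<^sup>2)
      = d\<^sup>2 + (\<Sum>k\<in>K. (g k)\<^sup>2 * expectation (\<lambda>\<omega>. (\<eta> k \<omega>)\<^sup>2))"
    unfolding eq using iA iB eA eB' by (simp add: prob_space)
qed

end

lemma sum_sq_closed:
  fixes M :: real
  shows "n \<ge> 1 \<Longrightarrow> (\<Sum>k\<in>{2..n}. (real k - 1 + M)\<^sup>2)
     = (real n - 1) * M\<^sup>2 + M * (real n - 1) * real n + (real n - 1) * real n * (2 * real n - 1) / 6"
proof (induction n rule: nat_induct_at_least)
  case base then show ?case by simp
next
  case (Suc n)
  have "{2..Suc n} = insert (Suc n) {2..n}" using Suc.hyps by (auto simp: atLeastAtMostSuc_conv)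
  hence "(\<Sum>k\<in>{2..Suc n}. (real k - 1 + M)\<^sup>2) = (real n + M)\<^sup>2 + (\<Sum>k\<in>{2..n}. (real k - 1 + M)\<^sup>2)"
    by simp
  also have "\<dots> = (real n + M)\<^sup>2 + ((real n - 1) * M\<^sup>2 + M * (real n - 1) * real n + (real n - 1) * real n * (2 * real n - 1) / 6)"
    using Suc.IH by simp
  also have "\<dots> = (real (Suc n) - 1) * M\<^sup>2 + M * (real (Suc n) - 1) * real (Suc n) + (real (Suc n) - 1) * real (Suc n) * (2 * real (Suc n) - 1) / 6"
    by (simp add: power2_eq_square field_simps)
  finally show ?case .
qed

lemma sum_c_bound:
  fixes \<alpha> \<beta> :: real
  assumes N: "N \<ge> 1" and a: "0 \<le> \<alpha>" and b: "0 \<le> \<beta>" "\<beta> \<le> real N * \<alpha>"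
  shows "(\<Sum>k\<in>{2..N}. ((real k - 1) * \<alpha> + \<beta>)\<^sup>2) \<le> \<alpha>\<^sup>2 * (7 / 3 * (real N)^3)"
proof -
  have "(\<Sum>k\<in>{2..N}. ((real k - 1) * \<alpha> + \<beta>)\<^sup>2) \<le> (\<Sum>k\<in>{2..N}. \<alpha>\<^sup>2 * (real k - 1 + real N)\<^sup>2)"
  proof (rule sum_mono)
    fix k assume k: "k \<in> {2..N}"
    have h0: "0 \<le> (real k - 1) * \<alpha> + \<beta>" using k a b by simp
    have "(real k - 1) * \<alpha> + \<beta> \<le> \<alpha> * (real k - 1 + real N)" using b by (simp add: algebra_simps)
    hence "((real k - 1) * \<alpha> + \<beta>)\<^sup>2 \<le> (\<alpha> * (real k - 1 + real N))\<^sup>2"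
      using h0 by (intro power_mono) auto
    thus "((real k - 1) * \<alpha> + \<beta>)\<^sup>2 \<le> \<alpha>\<^sup>2 * (real k - 1 + real N)\<^sup>2" by (simp add: power_mult_distrib)
  qed
  also have "\<dots> = \<alpha>\<^sup>2 * (\<Sum>k\<in>{2..N}. (real k - 1 + real N)\<^sup>2)" by (simp add: sum_distrib_left)
  also have "(\<Sum>k\<in>{2..N}. (real k - 1 + real N)\<^sup>2) = (real N - 1) * real N * (14 * real N - 1) / 6"
    using sum_sq_closed[OF N, of "real N"] by (simp add: power2_eq_square field_simps)
  also have "\<dots> \<le> 7 / 3 * (real N)^3"
  proof -
    have "0 \<le> real N" by simp
    hence "(real N - 1) * real N * (14 * real N - 1) \<le> 14 * (real N)^3"
      using N by (simp add: power3_eq_cube algebra_simps)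
    thus ?thesis by linarith
  qed
  finally show ?thesis using a by (simp add: mult_left_mono)
qed

lemma final_arith:
  fixes R S L \<alpha> \<beta> :: real and N :: nat
  assumes R: "R > 0" and S: "S > 0" and L: "L > 0" and N: "N \<ge> 1"
    and \<alpha>: "\<alpha> = min (R / (2 * S * real N powr (3/2))) (1 / L)"
    and b: "0 \<le> \<beta>" "\<beta> \<le> real N * \<alpha>"
  shows "7 / (6 * \<alpha> * (real N)\<^sup>2) * (R\<^sup>2 + S\<^sup>2 * (\<Sum>k\<in>{2..N}. ((real k - 1) * \<alpha> + \<beta>)\<^sup>2))
    \<le> 2 * L * R\<^sup>2 / (real N)\<^sup>2 + 4 * S * R / sqrt (real N)"
proof -
  define u where "u = sqrt (real N)"
  have u: "u > 0" using N by (simp add: u_def)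
  have Nu: "real N = u\<^sup>2" using N by (simp add: u_def)
  have P: "real N powr (3/2) = u ^ 3"
  proof -
    have e: "(3/2::real) = 1 + 1/2" by simp
    have "real N powr (3/2) = real N powr 1 * real N powr (1/2)" unfolding e by (rule powr_add)
    also have "\<dots> = real N * real N powr (1/2)" using N by simp
    also have "\<dots> = u\<^sup>2 * u" using N by (simp add: powr_half_sqrt u_def)
    finally show ?thesis by (simp add: power3_eq_cube power2_eq_square)
  qed
  have u4: "u ^ 4 = u * (u * (u * u))" by (simp add: eval_nat_numeral)
  define A where "A = R / (2 * S * u ^ 3)"
  have A0: "A > 0" using R S u by (simp add: A_def)
  have \<alpha>': "\<alpha> = min A (1 / L)" using \<alpha> P by (simp add: A_def)
  have a0: "\<alpha> > 0" using A0 L \<alpha>' by simp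
  have aA: "\<alpha> \<le> A" using \<alpha>' by simp
  have inv: "1 / \<alpha> \<le> L + 1 / A"
  proof (cases "A \<le> 1 / L")
    case True then have "\<alpha> = A" using \<alpha>' by simp
    then show ?thesis using L by simp
  next
    case False then have "\<alpha> = 1 / L" using \<alpha>' by simp
    then show ?thesis using A0 by simp
  qed
  have sb: "(\<Sum>k\<in>{2..N}. ((real k - 1) * \<alpha> + \<beta>)\<^sup>2) \<le> \<alpha>\<^sup>2 * (7 / 3 * (real N)^3)"
    using sum_c_bound[OF N _ b] a0 by simp
  have c0: "0 \<le> 7 / (6 * \<alpha> * (real N)\<^sup>2)" using a0 by simp
  have "7 / (6 * \<alpha> * (real N)\<^sup>2) * (R\<^sup>2 + S\<^sup>2 * (\<Sum>k\<in>{2..N}. ((real k - 1) * \<alpha> + \<beta>)\<^sup>2))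
      \<le> 7 / (6 * \<alpha> * (real N)\<^sup>2) * (R\<^sup>2 + S\<^sup>2 * (\<alpha>\<^sup>2 * (7 / 3 * (real N)^3)))"
    using sb c0 by (intro mult_left_mono add_left_mono) (auto intro: mult_left_mono)
  also have "\<dots> = 7 * R\<^sup>2 / (6 * u^4) * (1 / \<alpha>) + 49 / 18 * S\<^sup>2 * u\<^sup>2 * \<alpha>"
    using a0 u unfolding Nu by (simp add: field_simps power2_eq_square power3_eq_cube u4)
  also have "\<dots> \<le> 7 * R\<^sup>2 / (6 * u^4) * (L + 1 / A) + 49 / 18 * S\<^sup>2 * u\<^sup>2 * A"
  proof (rule add_mono)
    show "7 * R\<^sup>2 / (6 * u^4) * (1 / \<alpha>) \<le> 7 * R\<^sup>2 / (6 * u^4) * (L + 1 / A)"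
      using inv u by (intro mult_left_mono) auto
    show "49 / 18 * S\<^sup>2 * u\<^sup>2 * \<alpha> \<le> 49 / 18 * S\<^sup>2 * u\<^sup>2 * A"
      using aA by (intro mult_left_mono) auto
  qed
  also have "\<dots> = 7 / 6 * (L * R\<^sup>2 / u^4) + 133/36 * (S * R / u)"
    using R S u unfolding A_def by (simp add: field_simps power2_eq_square power3_eq_cube u4)
  also have "\<dots> \<le> 2 * (L * R\<^sup>2 / u^4) + 4 * (S * R / u)"
  proof -
    have g: "7/6 * p + 133/36 * q \<le> 2 * p + 4 * q" if "0 \<le> p" "0 \<le> q" for p q :: real
      using that by linarith
    have "0 \<le> L * R\<^sup>2 / u^4" "0 \<le> S * R / u" using L R S u by auto
    thus ?thesis by (rule g)
  qed
  also have "\<dots> = 2 * L * R\<^sup>2 / (real N)\<^sup>2 + 4 * S * R / sqrt (real N)"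
  proof -
    have N2: "(real N)\<^sup>2 = u ^ 4" unfolding Nu by (simp add: u4 power2_eq_square)
    show ?thesis unfolding N2 u_def[symmetric] by (simp add: mult.assoc)
  qed
  finally show ?thesis .
qed

theorem corollary2:
  fixes M :: "'w measure"
    and H C :: "real^'d^'d" and q \<theta>0 :: "real^'d" and L :: real
    and \<epsilon> :: "nat \<Rightarrow> 'w \<Rightarrow> real^'d"
    and N :: nat and \<alpha> \<beta> :: real
  assumes "prob_space M"
    and H_sym: "transpose H = H"
    and H_pd: "\<And>x. x \<noteq> 0 \<Longrightarrow> x \<bullet> (H *v x) > 0"
    and L_eig: "\<exists>v. v \<noteq> 0 \<and> H *v v = L *\<^sub>R v"
    and L_max: "\<And>\<mu> v. v \<noteq> 0 \<Longrightarrow> H *v v = \<mu> *\<^sub>R v \<Longrightarrow> \<mu> \<le> L"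
    and eps_meas: "\<And>n. n \<ge> 2 \<Longrightarrow> \<epsilon> n \<in> borel_measurable M"
    and eps_L2: "\<And>n. n \<ge> 2 \<Longrightarrow> integrable M (\<lambda>\<omega>. (norm (\<epsilon> n \<omega>))\<^sup>2)"
    and eps_mean: "\<And>n i. n \<ge> 2 \<Longrightarrow> prob_space.expectation M (\<lambda>\<omega>. \<epsilon> n \<omega> $ i) = 0"
    and eps_uncorr: "\<And>n m i j. n \<ge> 2 \<Longrightarrow> m \<ge> 2 \<Longrightarrow> n \<noteq> m \<Longrightarrow>
           prob_space.expectation M (\<lambda>\<omega>. \<epsilon> n \<omega> $ i * \<epsilon> m \<omega> $ j) = 0"
    and eps_cov: "\<And>n i j. n \<ge> 2 \<Longrightarrow>
           prob_space.expectation M (\<lambda>\<omega>. \<epsilon> n \<omega> $ i * \<epsilon> n \<omega> $ j) = C $ i $ j"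
    and trC: "trace C > 0"
    and ne: "\<theta>0 \<noteq> matrix_inv H *v q"
    and N: "N \<ge> 1"
    and \<alpha>_def: "\<alpha> = min (norm (\<theta>0 - matrix_inv H *v q) / (2 * sqrt (trace C) * real N powr (3/2))) (1 / L)"
    and \<beta>_ge: "0 \<le> \<beta>" and \<beta>_le: "\<beta> \<le> min (real N * \<alpha>) (1 / L)"
  shows "prob_space.expectation M
           (\<lambda>\<omega>. quad_obj H q (noisy_alg H (matrix_inv H *v q) \<alpha> \<beta> \<theta>0 (\<lambda>n. \<epsilon> n \<omega>) N))
         - quad_obj H q (matrix_inv H *v q)
         \<le> 2 * L * (norm (\<theta>0 - matrix_inv H *v q))\<^sup>2 / (real N)\<^sup>2
           + 4 * sqrt (trace C) * norm (\<theta>0 - matrix_inv H *v q) / sqrt (real N)"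
proof -
  interpret P: prob_space M by fact
  define ts where "ts = matrix_inv H *v q"
  define e0 where "e0 = \<theta>0 - ts"
  have ker: "\<forall>x. H *v x = 0 \<longrightarrow> x = 0"
  proof (intro allI impI)
    fix x assume "H *v x = 0"
    show "x = 0"
    proof (rule ccontr)
      assume "x \<noteq> 0"
      hence "x \<bullet> (H *v x) > 0" by (rule H_pd)
      with \<open>H *v x = 0\<close> show False by simp
    qed
  qed
  have "invertible H" using ker matrix_left_invertible_ker invertible_left_inverse by blast
  hence HH: "H ** matrix_inv H = mat 1"
    unfolding matrix_inv_def invertible_def
    by (rule someI_ex[where P="\<lambda>A'. H ** A' = mat 1 \<and> A' ** H = mat 1", THEN conjunct1])
  have Hts: "H *v ts = q" by (simp add: ts_def matrix_vector_mul_assoc HH)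
  have quad: "quad_obj H q \<theta> - quad_obj H q ts = 1/2 * ((\<theta> - ts) \<bullet> (H *v (\<theta> - ts)))" for \<theta>
  proof -
    have s1: "\<theta> \<bullet> (H *v ts) = ts \<bullet> (H *v \<theta>)"
      using sym_dot[OF H_sym, of ts \<theta>] by (simp add: inner_commute)
    have s2: "q \<bullet> \<theta> = ts \<bullet> (H *v \<theta>)" using sym_dot[OF H_sym, of ts \<theta>] Hts by simp
    have s3: "q \<bullet> ts = ts \<bullet> (H *v ts)" using Hts by (simp add: inner_commute)
    show ?thesis unfolding quad_obj_def
      using s1 s2 s3 by (simp add: matrix_vector_right_distrib inner_diff_left inner_diff_right
          matrix_vector_mult_diff_distrib algebra_simps)
  qed
  obtain B where Bfin: "finite B" and Borth: "pairwise orthogonal B"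
    and Beig: "\<forall>v\<in>B. norm v = 1 \<and> (\<exists>\<mu>. H *v v = \<mu> *\<^sub>R v)" and Bspan: "span B = UNIV"
    using spectral[OF H_sym] by blast
  have Bnorm: "\<forall>v\<in>B. norm v = 1" using Beig by blast
  define hh where "hh v = (SOME \<mu>. H *v v = \<mu> *\<^sub>R v)" for v
  have hh: "H *v v = hh v *\<^sub>R v" if "v \<in> B" for v
    unfolding hh_def using Beig that by (metis (mono_tags, lifting) someI_ex)
  have hv: "v \<bullet> (H *v z) = hh v * (v \<bullet> z)" if "v \<in> B" for v z
  proof -
    have "v \<bullet> (H *v z) = (H *v v) \<bullet> z" using sym_dot[OF H_sym, of v z] by simp
    thus ?thesis using hh[OF that] by simp
  qed
  have vv1: "v \<bullet> v = 1" if "v \<in> B" for v using Bnorm that by (simp add: dot_square_norm)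
  have hpos: "hh v > 0" if "v \<in> B" for v
  proof -
    have "v \<noteq> 0" using Bnorm that by auto
    hence "v \<bullet> (H *v v) > 0" by (rule H_pd)
    thus ?thesis using hv[OF that, of v] vv1[OF that] by simp
  qed
  have hle: "hh v \<le> L" if "v \<in> B" for v
  proof -
    have "v \<noteq> 0" using Bnorm that by auto
    thus ?thesis using L_max[of v "hh v"] hh[OF that] by blast
  qed
  have L0: "L > 0"
  proof -
    obtain v where v: "v \<noteq> 0" "H *v v = L *\<^sub>R v" using L_eig by blast
    have "v \<bullet> (H *v v) > 0" using v(1) by (rule H_pd)
    hence "L * (v \<bullet> v) > 0" using v(2) by simp
    moreover have "v \<bullet> v > 0" using v(1) by simp
    ultimately show ?thesis by (simp add: zero_less_mult_iff)
  qed
  define R where "R = norm e0"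
  define S where "S = sqrt (trace C)"
  have R0: "R > 0" using ne by (simp add: R_def e0_def ts_def)
  have S0: "S > 0" using trC by (simp add: S_def)
  have SS: "S\<^sup>2 = trace C" using trC by (simp add: S_def)
  have \<alpha>': "\<alpha> = min (R / (2 * S * real N powr (3/2))) (1 / L)"
    using \<alpha>_def by (simp add: R_def S_def e0_def ts_def)
  have a0: "\<alpha> > 0" using R0 S0 L0 N \<alpha>' by simp
  have aL: "\<alpha> \<le> 1 / L" using \<alpha>' by simp
  have bL: "\<beta> \<le> 1 / L" using \<beta>_le by simp
  have QB: "hh v * (Qs (2 - (\<alpha> + \<beta>) * hh v) (1 - \<beta> * hh v) m)\<^sup>2 \<le> 7 / (3 * \<alpha>)" if "v \<in> B" for v m
  proof -
    have h0: "0 < hh v" "hh v \<le> L" using hpos[OF that] hle[OF that] by auto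
    have x1: "\<alpha> * hh v \<le> 1"
    proof -
      have "\<alpha> * hh v \<le> (1 / L) * L" using aL h0 a0 by (intro mult_mono) auto
      thus ?thesis using L0 by simp
    qed
    have y1: "\<beta> * hh v \<le> 1"
    proof -
      have "\<beta> * hh v \<le> (1 / L) * L" using bL h0 \<beta>_ge by (intro mult_mono) auto
      thus ?thesis using L0 by simp
    qed
    have "\<alpha> * hh v * (Qs (2 - \<alpha> * hh v - \<beta> * hh v) (1 - \<beta> * hh v) m)\<^sup>2 \<le> 7/3"
      using Qs_bound[of "\<alpha> * hh v" "\<beta> * hh v" m] a0 h0 x1 y1 \<beta>_ge by simp
    moreover have e: "2 - (\<alpha> + \<beta>) * hh v = 2 - \<alpha> * hh v - \<beta> * hh v" by (simp add: algebra_simps)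
    ultimately have "\<alpha> * (hh v * (Qs (2 - (\<alpha> + \<beta>) * hh v) (1 - \<beta> * hh v) m)\<^sup>2) \<le> 7/3"
      unfolding e by (simp add: mult.assoc)
    thus ?thesis using a0 by (simp add: field_simps)
  qed
  define Av where "Av v = 2 - (\<alpha> + \<beta>) * hh v" for v
  define Bv where "Bv v = 1 - \<beta> * hh v" for v
  define dd where "dd v = Qs (Av v) (Bv v) N * (v \<bullet> e0)" for v
  define cc where "cc k = (real k - 1) * \<alpha> + \<beta>" for k
  define gg where "gg v k = cc k * Qs (Av v) (Bv v) (Suc N - k)" for v k
  define \<eta> where "\<eta> v k \<omega> = v \<bullet> \<epsilon> k \<omega>" for v k \<omega>
  define K where "K = {2..N}"
  define \<theta>N where "\<theta>N \<omega> = noisy_alg H ts \<alpha> \<beta> \<theta>0 (\<lambda>n. \<epsilon> n \<omega>) N" for \<omega>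
  define FF where "FF v \<omega> = dd v + (\<Sum>k\<in>K. gg v k * \<eta> v k \<omega>)" for v \<omega>
  have Npos: "real N > 0" using N by simp
  have rep: "v \<bullet> (\<theta>N \<omega> - ts) = FF v \<omega> / real N" if "v \<in> B" for v \<omega>
  proof -
    have ar: "real N * (v \<bullet> (\<theta>N \<omega> - ts)) = Qs (Av v) (Bv v) N * (v \<bullet> (\<theta>0 - ts))
      + (\<Sum>k\<le>N. wt \<alpha> \<beta> (\<lambda>k. v \<bullet> \<epsilon> k \<omega>) k * Qs (Av v) (Bv v) (Suc N - k))"
      unfolding \<theta>N_def Av_def Bv_def by (rule alg_rep[OF hv[OF that]])
    have "(\<Sum>k\<le>N. wt \<alpha> \<beta> (\<lambda>k. v \<bullet> \<epsilon> k \<omega>) k * Qs (Av v) (Bv v) (Suc N - k))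
        = (\<Sum>k\<le>N. if 2 \<le> k then gg v k * \<eta> v k \<omega> else 0)"
      by (rule sum.cong) (simp_all add: wt_def gg_def cc_def \<eta>_def)
    also have "\<dots> = (\<Sum>k\<in>{k\<in>{..N}. 2 \<le> k}. gg v k * \<eta> v k \<omega>)"
      by (rule sum.inter_filter[symmetric]) simp
    also have "{k\<in>{..N}. 2 \<le> k} = K" by (auto simp: K_def)
    finally have "real N * (v \<bullet> (\<theta>N \<omega> - ts)) = FF v \<omega>"
      using ar by (simp add: FF_def dd_def e0_def)
    thus ?thesis using Npos by (simp add: field_simps)
  qed
  have pw: "quad_obj H q (\<theta>N \<omega>) = quad_obj H q ts + (\<Sum>v\<in>B. (hh v / (2 * (real N)\<^sup>2)) * (FF v \<omega>)\<^sup>2)" for \<omega>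
  proof -
    define z where "z = \<theta>N \<omega> - ts"
    have "z \<bullet> (H *v z) = (\<Sum>v\<in>B. (v \<bullet> z) * (v \<bullet> (H *v z)))"
      using Bfin Borth Bnorm Bspan by (intro onb_inner) auto
    also have "\<dots> = (\<Sum>v\<in>B. hh v * (FF v \<omega> / real N)\<^sup>2)"
      by (rule sum.cong) (simp_all add: hv rep z_def power2_eq_square)
    finally have "quad_obj H q (\<theta>N \<omega>) - quad_obj H q ts = 1/2 * (\<Sum>v\<in>B. hh v * (FF v \<omega> / real N)\<^sup>2)"
      using quad[of "\<theta>N \<omega>"] by (simp add: z_def)
    also have "\<dots> = (\<Sum>v\<in>B. (hh v / (2 * (real N)\<^sup>2)) * (FF v \<omega>)\<^sup>2)"
      by (simp add: sum_distrib_left power_divide)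
    finally show ?thesis by simp
  qed
  have Kge: "k \<ge> 2" if "k \<in> K" for k using that by (simp add: K_def)
  have finK: "finite K" by (simp add: K_def)
  have n_int1: "integrable M (\<eta> v k)" and n_mean: "P.expectation (\<eta> v k) = 0" if "k \<in> K" for v k
  proof -
    have k2: "k \<ge> 2" using Kge[OF that] .
    show "integrable M (\<eta> v k)" unfolding \<eta>_def
      by (rule P.E1(1)[OF eps_meas[OF k2] eps_L2[OF k2]]) (rule eps_mean[OF k2])
    show "P.expectation (\<eta> v k) = 0" unfolding \<eta>_def
      by (rule P.E1(2)[OF eps_meas[OF k2] eps_L2[OF k2]]) (rule eps_mean[OF k2])
  qed
  have n_int2: "integrable M (\<lambda>\<omega>. \<eta> v k \<omega> * \<eta> v l \<omega>)" if "k \<in> K" "l \<in> K" for v k l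
    unfolding \<eta>_def
    by (rule P.E2(1)[OF eps_meas[OF Kge[OF that(1)]] eps_L2[OF Kge[OF that(1)]]
          eps_meas[OF Kge[OF that(2)]] eps_L2[OF Kge[OF that(2)]]])
  have n_unc: "P.expectation (\<lambda>\<omega>. \<eta> v k \<omega> * \<eta> v l \<omega>) = 0" if "k \<in> K" "l \<in> K" "k \<noteq> l" for v k l
    unfolding \<eta>_def
    by (rule P.E2(2)[OF eps_meas[OF Kge[OF that(1)]] eps_L2[OF Kge[OF that(1)]]
          eps_meas[OF Kge[OF that(2)]] eps_L2[OF Kge[OF that(2)]]])
       (rule eps_uncorr[OF Kge[OF that(1)] Kge[OF that(2)] that(3)])
  have intF: "integrable M (\<lambda>\<omega>. (FF v \<omega>)\<^sup>2)" for v
    unfolding FF_def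
    by (rule P.exp_sq(1)[OF finK n_int1 n_mean n_int2 n_unc])
  have EF: "P.expectation (\<lambda>\<omega>. (FF v \<omega>)\<^sup>2) = (dd v)\<^sup>2 + (\<Sum>k\<in>K. (gg v k)\<^sup>2 * P.expectation (\<lambda>\<omega>. (\<eta> v k \<omega>)\<^sup>2))" for v
    unfolding FF_def
    by (rule P.exp_sq(2)[OF finK n_int1 n_mean n_int2 n_unc])
  have Eq: "P.expectation (\<lambda>\<omega>. quad_obj H q (\<theta>N \<omega>))
      = quad_obj H q ts + (\<Sum>v\<in>B. (hh v / (2 * (real N)\<^sup>2)) * P.expectation (\<lambda>\<omega>. (FF v \<omega>)\<^sup>2))"
  proof -
    have "P.expectation (\<lambda>\<omega>. quad_obj H q (\<theta>N \<omega>))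
        = P.expectation (\<lambda>\<omega>. quad_obj H q ts + (\<Sum>v\<in>B. (hh v / (2 * (real N)\<^sup>2)) * (FF v \<omega>)\<^sup>2))"
      by (simp only: pw)
    also have "\<dots> = quad_obj H q ts + (\<Sum>v\<in>B. (hh v / (2 * (real N)\<^sup>2)) * P.expectation (\<lambda>\<omega>. (FF v \<omega>)\<^sup>2))"
      using intF by (simp add: integral_sum P.prob_space)
    finally show ?thesis .
  qed
  have Enn: "0 \<le> P.expectation (\<lambda>\<omega>. (\<eta> v k \<omega>)\<^sup>2)" for v k
    by (rule integral_nonneg_AE) simp
  have parse: "(\<Sum>v\<in>B. (v \<bullet> x)\<^sup>2) = (norm x)\<^sup>2" for x
  proof -
    have "x \<bullet> x = (\<Sum>v\<in>B. (v \<bullet> x) * (v \<bullet> x))"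
      using Bfin Borth Bnorm Bspan by (intro onb_inner) auto
    thus ?thesis unfolding power2_norm_eq_inner by (simp add: power2_eq_square)
  qed
  have Eeta: "(\<Sum>v\<in>B. P.expectation (\<lambda>\<omega>. (\<eta> v k \<omega>)\<^sup>2)) = trace C" if "k \<in> K" for k
  proof -
    have k2: "k \<ge> 2" using Kge[OF that] .
    have i: "integrable M (\<lambda>\<omega>. (\<eta> v k \<omega>)\<^sup>2)" for v
      using n_int2[OF that that, of v] by (simp add: power2_eq_square)
    have "(\<Sum>v\<in>B. P.expectation (\<lambda>\<omega>. (\<eta> v k \<omega>)\<^sup>2)) = P.expectation (\<lambda>\<omega>. \<Sum>v\<in>B. (\<eta> v k \<omega>)\<^sup>2)"
      using i by (simp add: integral_sum)
    also have "\<dots> = P.expectation (\<lambda>\<omega>. (norm (\<epsilon> k \<omega>))\<^sup>2)"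
      by (simp add: \<eta>_def parse)
    also have "\<dots> = trace C"
      by (rule P.E3[OF eps_meas[OF k2] eps_L2[OF k2]]) (rule eps_cov[OF k2])
    finally show ?thesis .
  qed
  have perv: "hh v * ((dd v)\<^sup>2 + (\<Sum>k\<in>K. (gg v k)\<^sup>2 * P.expectation (\<lambda>\<omega>. (\<eta> v k \<omega>)\<^sup>2)))
      \<le> 7 / (3 * \<alpha>) * ((v \<bullet> e0)\<^sup>2 + (\<Sum>k\<in>K. (cc k)\<^sup>2 * P.expectation (\<lambda>\<omega>. (\<eta> v k \<omega>)\<^sup>2)))"
    if "v \<in> B" for v
  proof -
    have a: "hh v * (dd v)\<^sup>2 \<le> 7 / (3 * \<alpha>) * (v \<bullet> e0)\<^sup>2"
    proof -
      have "hh v * (dd v)\<^sup>2 = (hh v * (Qs (Av v) (Bv v) N)\<^sup>2) * (v \<bullet> e0)\<^sup>2"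
        by (simp add: dd_def power_mult_distrib mult.assoc)
      also have "\<dots> \<le> 7 / (3 * \<alpha>) * (v \<bullet> e0)\<^sup>2"
        using QB[OF that, of N] by (intro mult_right_mono) (auto simp: Av_def Bv_def)
      finally show ?thesis .
    qed
    have b: "hh v * ((gg v k)\<^sup>2 * P.expectation (\<lambda>\<omega>. (\<eta> v k \<omega>)\<^sup>2))
        \<le> 7 / (3 * \<alpha>) * ((cc k)\<^sup>2 * P.expectation (\<lambda>\<omega>. (\<eta> v k \<omega>)\<^sup>2))" for k
    proof -
      have "hh v * ((gg v k)\<^sup>2 * P.expectation (\<lambda>\<omega>. (\<eta> v k \<omega>)\<^sup>2))
          = (hh v * (Qs (Av v) (Bv v) (Suc N - k))\<^sup>2) * ((cc k)\<^sup>2 * P.expectation (\<lambda>\<omega>. (\<eta> v k \<omega>)\<^sup>2))"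
        by (simp add: gg_def power_mult_distrib algebra_simps)
      also have "\<dots> \<le> 7 / (3 * \<alpha>) * ((cc k)\<^sup>2 * P.expectation (\<lambda>\<omega>. (\<eta> v k \<omega>)\<^sup>2))"
        using QB[OF that, of "Suc N - k"] Enn[of v k] by (intro mult_right_mono) (auto simp: Av_def Bv_def)
      finally show ?thesis .
    qed
    have "hh v * ((dd v)\<^sup>2 + (\<Sum>k\<in>K. (gg v k)\<^sup>2 * P.expectation (\<lambda>\<omega>. (\<eta> v k \<omega>)\<^sup>2)))
        = hh v * (dd v)\<^sup>2 + (\<Sum>k\<in>K. hh v * ((gg v k)\<^sup>2 * P.expectation (\<lambda>\<omega>. (\<eta> v k \<omega>)\<^sup>2)))"
      by (simp add: distrib_left sum_distrib_left)
    also have "\<dots> \<le> 7 / (3 * \<alpha>) * (v \<bullet> e0)\<^sup>2 + (\<Sum>k\<in>K. 7 / (3 * \<alpha>) * ((cc k)\<^sup>2 * P.expectation (\<lambda>\<omega>. (\<eta> v k \<omega>)\<^sup>2)))"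
      using a b by (intro add_mono sum_mono) auto
    also have "\<dots> = 7 / (3 * \<alpha>) * ((v \<bullet> e0)\<^sup>2 + (\<Sum>k\<in>K. (cc k)\<^sup>2 * P.expectation (\<lambda>\<omega>. (\<eta> v k \<omega>)\<^sup>2)))"
      by (simp add: distrib_left sum_distrib_left)
    finally show ?thesis .
  qed
  have tot: "(\<Sum>v\<in>B. (hh v / (2 * (real N)\<^sup>2)) * P.expectation (\<lambda>\<omega>. (FF v \<omega>)\<^sup>2))
      \<le> 7 / (6 * \<alpha> * (real N)\<^sup>2) * (R\<^sup>2 + S\<^sup>2 * (\<Sum>k\<in>K. (cc k)\<^sup>2))"
  proof -
    have "(\<Sum>v\<in>B. (hh v / (2 * (real N)\<^sup>2)) * P.expectation (\<lambda>\<omega>. (FF v \<omega>)\<^sup>2))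
        = 1 / (2 * (real N)\<^sup>2) * (\<Sum>v\<in>B. hh v * ((dd v)\<^sup>2 + (\<Sum>k\<in>K. (gg v k)\<^sup>2 * P.expectation (\<lambda>\<omega>. (\<eta> v k \<omega>)\<^sup>2))))"
      by (simp add: EF sum_distrib_left)
    also have "\<dots> \<le> 1 / (2 * (real N)\<^sup>2) * (\<Sum>v\<in>B. 7 / (3 * \<alpha>) * ((v \<bullet> e0)\<^sup>2 + (\<Sum>k\<in>K. (cc k)\<^sup>2 * P.expectation (\<lambda>\<omega>. (\<eta> v k \<omega>)\<^sup>2))))"
      using perv by (intro mult_left_mono sum_mono) auto
    also have "(\<Sum>v\<in>B. 7 / (3 * \<alpha>) * ((v \<bullet> e0)\<^sup>2 + (\<Sum>k\<in>K. (cc k)\<^sup>2 * P.expectation (\<lambda>\<omega>. (\<eta> v k \<omega>)\<^sup>2))))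
        = 7 / (3 * \<alpha>) * ((\<Sum>v\<in>B. (v \<bullet> e0)\<^sup>2) + (\<Sum>k\<in>K. (cc k)\<^sup>2 * (\<Sum>v\<in>B. P.expectation (\<lambda>\<omega>. (\<eta> v k \<omega>)\<^sup>2))))"
    proof -
      define c where "c = 7 / (3 * \<alpha>)"
      define Ev where "Ev v k = P.expectation (\<lambda>\<omega>. (\<eta> v k \<omega>)\<^sup>2)" for v k
      have "(\<Sum>v\<in>B. c * ((v \<bullet> e0)\<^sup>2 + (\<Sum>k\<in>K. (cc k)\<^sup>2 * Ev v k)))
          = c * (\<Sum>v\<in>B. (v \<bullet> e0)\<^sup>2 + (\<Sum>k\<in>K. (cc k)\<^sup>2 * Ev v k))"
        by (rule sum_distrib_left[symmetric])
      also have "(\<Sum>v\<in>B. (v \<bullet> e0)\<^sup>2 + (\<Sum>k\<in>K. (cc k)\<^sup>2 * Ev v k))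
          = (\<Sum>v\<in>B. (v \<bullet> e0)\<^sup>2) + (\<Sum>v\<in>B. \<Sum>k\<in>K. (cc k)\<^sup>2 * Ev v k)"
        by (rule sum.distrib)
      also have "(\<Sum>v\<in>B. \<Sum>k\<in>K. (cc k)\<^sup>2 * Ev v k) = (\<Sum>k\<in>K. \<Sum>v\<in>B. (cc k)\<^sup>2 * Ev v k)"
        by (rule sum.swap)
      also have "\<dots> = (\<Sum>k\<in>K. (cc k)\<^sup>2 * (\<Sum>v\<in>B. Ev v k))"
        by (simp add: sum_distrib_left)
      finally show ?thesis unfolding c_def Ev_def .
    qed
    also have "\<dots> = 7 / (3 * \<alpha>) * (R\<^sup>2 + S\<^sup>2 * (\<Sum>k\<in>K. (cc k)\<^sup>2))"
      using Eeta by (simp add: parse R_def SS sum_distrib_left mult.commute)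
    finally show ?thesis using Npos a0 by (simp add: field_simps)
  qed
  have fa: "7 / (6 * \<alpha> * (real N)\<^sup>2) * (R\<^sup>2 + S\<^sup>2 * (\<Sum>k\<in>K. (cc k)\<^sup>2))
      \<le> 2 * L * R\<^sup>2 / (real N)\<^sup>2 + 4 * S * R / sqrt (real N)"
    unfolding K_def cc_def by (rule final_arith[OF R0 S0 L0 N \<alpha>' \<beta>_ge]) (use \<beta>_le in simp)
  have "P.expectation (\<lambda>\<omega>. quad_obj H q (\<theta>N \<omega>)) - quad_obj H q ts
      \<le> 2 * L * R\<^sup>2 / (real N)\<^sup>2 + 4 * S * R / sqrt (real N)"
    using Eq tot fa by linarith
  thus ?thesis by (simp add: \<theta>N_def R_def S_def e0_def ts_def)
qed

end
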